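(* Let $(X_1,\|\cdot\|_1)$ and $(X_2,\|\cdot\|_2)$ be two isomorphic Banach spaces. Assume that, for each $\varepsilon>0$, $X_1$ admits a bounded linear operator which is $\varepsilon$-hypercyclic but not hypercyclic. Then, for each $\varepsilon>0$, $X_2$ admits a bounded linear operator which is $\varepsilon$-hypercyclic but not hypercyclic.
   Context: For $\varepsilon>0$, an operator $T$ on a Banach space $X$ is $\varepsilon$-hypercyclic if there is $x\in X$ such that for every $y\in X\setminus\{0\}$ there is $n\in\mathbb{N}$ with $\|T^nx-y\|\le\varepsilon\|y\|$; $T$ is hypercyclic if some orbit $\{T^nx:n\in\mathbb{N}\}$ is dense in $X$. *)

theory Defs
  imports "HOL-Analysis.Analysis"
begin

definition eps_hypercyclic :: "real \<Rightarrow> ('a::real_normed_vector \<Rightarrow> 'a) \<Rightarrow> bool" where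
  "eps_hypercyclic \<epsilon> T \<longleftrightarrow>
     (\<exists>x. \<forall>y. y \<noteq> 0 \<longrightarrow> (\<exists>n::nat. norm ((T ^^ n) x - y) \<le> \<epsilon> * norm y))"

definition hypercyclic :: "('a::real_normed_vector \<Rightarrow> 'a) \<Rightarrow> bool" where
  "hypercyclic T \<longleftrightarrow> (\<exists>x. closure (range (\<lambda>n::nat. (T ^^ n) x)) = UNIV)"

definition isomorphic_banach :: "'a::banach itself \<Rightarrow> 'b::banach itself \<Rightarrow> bool" where
  "isomorphic_banach _ _ \<longleftrightarrow>
     (\<exists>S :: 'a \<Rightarrow> 'b. bounded_linear S \<and> bij S \<and> bounded_linear (inv S))"

end

theory Submission
  imports Defs
begin

lemma conj_iter:
  assumes "bij S"
  shows "((\<lambda>y. S (T (inv S y))) ^^ n) = (\<lambda>y. S ((T ^^ n) (inv S y)))"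
proof (induction n)
  case 0
  then show ?case using assms by (auto simp: bij_is_surj surj_f_inv_f)
next
  case (Suc n)
  show ?case
  proof
    fix y
    have "inv S (S ((T ^^ n) (inv S y))) = (T ^^ n) (inv S y)"
      using assms by (simp add: bij_is_inj)
    then show "((\<lambda>y. S (T (inv S y))) ^^ Suc n) y = S ((T ^^ Suc n) (inv S y))"
      using Suc by simp
  qed
qed

theorem proposition6p1:
  assumes "isomorphic_banach TYPE('a::banach) TYPE('b::banach)"
    and "\<forall>\<epsilon>>0. \<exists>T :: 'a \<Rightarrow> 'a. bounded_linear T \<and> eps_hypercyclic \<epsilon> T \<and> \<not> hypercyclic T"
  shows "\<forall>\<epsilon>>0. \<exists>T :: 'b \<Rightarrow> 'b. bounded_linear T \<and> eps_hypercyclic \<epsilon> T \<and> \<not> hypercyclic T"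
proof (intro allI impI)
  fix \<epsilon> :: real assume ep: "\<epsilon> > 0"
  obtain S :: "'a \<Rightarrow> 'b" where S: "bounded_linear S" "bij S" "bounded_linear (inv S)"
    using assms(1) unfolding isomorphic_banach_def by blast
  obtain M where M: "M > 0" "\<And>x. norm (S x) \<le> norm x * M"
    using bounded_linear.pos_bounded[OF S(1)] by blast
  obtain M' where M': "M' > 0" "\<And>x. norm (inv S x) \<le> norm x * M'"
    using bounded_linear.pos_bounded[OF S(3)] by blast
  define \<delta> where "\<delta> = \<epsilon> / (M * M')"
  have dpos: "\<delta> > 0" using ep M M' by (simp add: \<delta>_def)
  obtain T :: "'a \<Rightarrow> 'a" where T: "bounded_linear T" "eps_hypercyclic \<delta> T" "\<not> hypercyclic T"
    using assms(2) dpos by blast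
  define U where "U = (\<lambda>y. S (T (inv S y)))"
  have Uit: "\<And>n. (U ^^ n) = (\<lambda>y. S ((T ^^ n) (inv S y)))"
    unfolding U_def using conj_iter[OF S(2)] by blast
  have SinvS: "\<And>y. S (inv S y) = y" using S(2) by (simp add: bij_is_surj surj_f_inv_f)
  have invSS: "\<And>x. inv S (S x) = x" using S(2) by (simp add: bij_is_inj)
  have "bounded_linear U"
    unfolding U_def
    using bounded_linear_compose[OF S(1) bounded_linear_compose[OF T(1) S(3)]] by (simp add: o_def)
  moreover have "eps_hypercyclic \<epsilon> U"
  proof -
    obtain x where x: "\<And>y. y \<noteq> 0 \<Longrightarrow> \<exists>n. norm ((T ^^ n) x - y) \<le> \<delta> * norm y"
      using T(2) unfolding eps_hypercyclic_def by blast
    have "\<exists>n. norm ((U ^^ n) (S x) - y) \<le> \<epsilon> * norm y" if "y \<noteq> 0" for y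
    proof -
      have "inv S y \<noteq> 0"
        using that SinvS linear_0[OF bounded_linear.linear[OF S(1)]] by metis
      then obtain n where n: "norm ((T ^^ n) x - inv S y) \<le> \<delta> * norm (inv S y)" using x by blast
      have "(U ^^ n) (S x) - y = S ((T ^^ n) x - inv S y)"
        using Uit invSS SinvS linear_diff[OF bounded_linear.linear[OF S(1)]] by simp
      hence "norm ((U ^^ n) (S x) - y) \<le> norm ((T ^^ n) x - inv S y) * M" using M(2) by simp
      also have "\<dots> \<le> \<delta> * norm (inv S y) * M" using n M(1) by (simp add: mult_right_mono)
      also have "\<dots> \<le> \<delta> * (norm y * M') * M"
        using M'(2)[of y] dpos M(1) by (simp add: mult_left_mono mult_right_mono)
      also have "\<dots> = \<epsilon> * norm y" using M M' by (simp add: \<delta>_def field_simps)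
      finally show ?thesis by blast
    qed
    then show ?thesis unfolding eps_hypercyclic_def by blast
  qed
  moreover have "\<not> hypercyclic U"
  proof
    assume "hypercyclic U"
    then obtain z where z: "closure (range (\<lambda>n. (U ^^ n) z)) = UNIV"
      unfolding hypercyclic_def by blast
    have cont: "continuous_on UNIV (inv S)"
      by (simp add: S(3) linear_continuous_on)
    have "inv S ` closure (range (\<lambda>n. (U ^^ n) z)) \<subseteq> closure (inv S ` range (\<lambda>n. (U ^^ n) z))"
      by (rule image_closure_subset) (auto intro: closure_subset[THEN subsetD] continuous_on_subset[OF cont])
    moreover have "inv S ` range (\<lambda>n. (U ^^ n) z) = range (\<lambda>n. (T ^^ n) (inv S z))"
      using Uit invSS by (auto simp: image_iff)
    moreover have "inv S ` UNIV = UNIV"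
      using S(2) by (simp add: bij_imp_bij_inv bij_is_surj)
    ultimately have "closure (range (\<lambda>n. (T ^^ n) (inv S z))) = UNIV"
      using z by auto
    with T(3) show False unfolding hypercyclic_def by blast
  qed
  ultimately show "\<exists>T :: 'b \<Rightarrow> 'b. bounded_linear T \<and> eps_hypercyclic \<epsilon> T \<and> \<not> hypercyclic T"
    by blast
qed

end
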